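(* Fix $n\ge 2$. For any $\epsilon>0$ and any tuple $(\mu_1,\dots,\mu_{n-2})\in\mathbb{R}^{n-2}$, there exists a matrix $A\in SL(n,\mathbb{Z})$ which is diagonalizable over $\mathbb{R}$ (so all its eigenvalues are real) such that its eigenvalues $\lambda_1,\dots,\lambda_n$ can be ordered so that (1) $|\lambda_i-\mu_i|<\epsilon$ for $1\le i\le n-2$; (2) $|\lambda_{n-1}|>1/\epsilon$ and $|\lambda_n|<\epsilon$. *)

theory Defs
  imports Complex_Main "Jordan_Normal_Form.Determinant"
begin

end

theory Submission imports Defs begin

lemma det_mat_diag: "det (mat_diag n (f::nat \<Rightarrow> 'a::comm_ring_1)) = (\<Prod>i<n. f i)"
proof -
  have "det (mat_diag n f) = prod_list (diag_mat (mat_diag n f))"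
    by (rule det_upper_triangular) (auto simp: upper_triangular_def mat_diag_def)
  also have "diag_mat (mat_diag n f) = map f [0..<n]"
    by (auto simp: diag_mat_def mat_diag_def intro: nth_equalityI)
  also have "prod_list (map f [0..<n]) = (\<Prod>i<n. f i)"
    by (simp add: prod.list_conv_set_nth lessThan_atLeast0)
  finally show ?thesis .
qed

lemma vander_det_nz:
  fixes ev :: "nat \<Rightarrow> real"
  assumes inj: "inj_on ev {..<n}"
  shows "det (mat n n (\<lambda>(i,k). ev k ^ i)) \<noteq> 0"
proof
  let ?V = "mat n n (\<lambda>(i,k). ev k ^ i)"
  assume "det ?V = 0"
  hence "det (transpose_mat ?V) = 0" by (subst det_transpose[of _ n]) auto
  then obtain v where v: "v \<in> carrier_vec n" "v \<noteq> 0\<^sub>v n" "transpose_mat ?V *\<^sub>v v = 0\<^sub>v n"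
    using det_0_iff_vec_prod_zero[of "transpose_mat ?V" n] by auto
  define Q where "Q = (\<Sum>i<n. monom (v $ i) i)"
  from v obtain i0 where i0: "i0 < n" "v $ i0 \<noteq> 0"
    by (metis eq_vecI carrier_vecD index_zero_vec(1,2))
  have cQ: "coeff Q j = (if j < n then v $ j else 0)" for j
    unfolding Q_def by (simp add: coeff_sum coeff_monom)
  have Q0: "Q \<noteq> 0" using cQ[of i0] i0 by auto
  have degQ: "degree Q < n"
  proof -
    have "degree Q \<le> n - 1" by (rule degree_le) (auto simp: cQ)
    thus ?thesis using i0 by linarith
  qed
  have roots: "poly Q (ev k) = 0" if k: "k < n" for k
  proof -
    have "(transpose_mat ?V *\<^sub>v v) $ k = 0" using v(3) k by simp
    hence "(\<Sum>i<n. ev k ^ i * v $ i) = 0"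
      using k v(1) by (simp add: scalar_prod_def row_def col_def lessThan_atLeast0)
    moreover have "poly Q (ev k) = (\<Sum>i<n. v $ i * ev k ^ i)"
      unfolding Q_def by (simp add: poly_sum poly_monom)
    ultimately show ?thesis by (simp add: mult.commute)
  qed
  have "ev ` {..<n} \<subseteq> {x. poly Q x = 0}" using roots by auto
  hence "card (ev ` {..<n}) \<le> card {x. poly Q x = 0}"
    by (intro card_mono poly_roots_finite Q0)
  also have "\<dots> \<le> degree Q" by (rule card_poly_roots_bound[OF Q0])
  finally show False using card_image[OF inj] degQ by simp
qed

lemma companion_diag:
  fixes c :: "nat \<Rightarrow> int" and ev :: "nat \<Rightarrow> real"
  assumes inj: "inj_on ev {..<n}"
   and root: "\<And>k. k<n \<Longrightarrow> ev k ^ n + (\<Sum>j<n. real_of_int (c j) * ev k ^ j) = 0"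
   and prd: "(\<Prod>i<n. ev i) = 1"
  shows "\<exists>A::int mat. A \<in> carrier_mat n n \<and> det A = 1 \<and> similar_mat (map_mat real_of_int A) (mat_diag n ev)"
proof -
  define A :: "int mat" where "A = mat n n (\<lambda>(i,j). if Suc i = j then 1 else if i = n-1 then - c j else 0)"
  define AR where "AR = map_mat real_of_int A"
  define V where "V = mat n n (\<lambda>(i,k). ev k ^ i)"
  define D where "D = mat_diag n ev"
  have A: "A \<in> carrier_mat n n" and AR: "AR \<in> carrier_mat n n" and V: "V \<in> carrier_mat n n"
    and D: "D \<in> carrier_mat n n"
    by (auto simp: A_def AR_def V_def D_def)
  have AV: "AR * V = V * D"
  proof (rule eq_matI)
    fix i k assume i: "i < dim_row (V * D)" and k: "k < dim_col (V * D)"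
    hence i: "i < n" and k: "k < n" using V D by auto
    have "(AR * V) $$ (i,k) = (\<Sum>j<n. (if Suc i = j then 1 else if i = n-1 then - real_of_int (c j) else 0) * ev k ^ j)"
      using i k by (auto simp: AR_def A_def V_def scalar_prod_def lessThan_atLeast0 row_def col_def
          intro!: sum.cong)
    also have "\<dots> = ev k ^ i * ev k"
    proof (cases "i = n - 1")
      case True
      hence "(\<Sum>j<n. (if Suc i = j then 1 else if i = n-1 then - real_of_int (c j) else 0) * ev k ^ j)
          = - (\<Sum>j<n. real_of_int (c j) * ev k ^ j)"
        using i by (auto simp: sum_negf[symmetric] intro!: sum.cong)
      also have "\<dots> = ev k ^ n" using root[OF k] by linarith
      also have "\<dots> = ev k ^ i * ev k" using True i
        by (metis Suc_pred' less_nat_zero_code not_gr_zero power_Suc2)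
      finally show ?thesis .
    next
      case False
      hence "(\<Sum>j<n. (if Suc i = j then 1 else if i = n-1 then - real_of_int (c j) else 0) * ev k ^ j)
          = (\<Sum>j<n. (if Suc i = j then ev k ^ j else 0))"
        by (intro sum.cong) auto
      also have "\<dots> = ev k ^ Suc i" using False i by (simp add: sum.delta)
      finally show ?thesis by simp
    qed
    also have "\<dots> = (V * D) $$ (i,k)"
      using i k unfolding D_def by (subst mat_diag_mult_right[OF V]) (simp add: V_def)
    finally show "(AR * V) $$ (i,k) = (V * D) $$ (i,k)" .
  qed (use AR V D in auto)
  have "det V \<noteq> 0" unfolding V_def by (rule vander_det_nz[OF inj])
  from det_non_zero_imp_unit[OF V this, of "()"]
  obtain W where W: "W \<in> carrier_mat n n" "V * W = 1\<^sub>m n" "W * V = 1\<^sub>m n"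
    by (auto simp: Units_def ring_mat_def)
  have ARe: "AR = V * D * W"
  proof -
    have "AR = AR * (V * W)" using W AR by simp
    also have "\<dots> = (AR * V) * W" using AR V W by (simp add: assoc_mult_mat)
    also have "\<dots> = V * D * W" by (simp add: AV)
    finally show ?thesis .
  qed
  have sim: "similar_mat AR D"
    by (rule similar_matI[of _ _ V W n]) (use AR D V W ARe in auto)
  have "det AR = det V * det D * det W"
    unfolding ARe using V D W by (simp add: det_mult[of _ n])
  also have "\<dots> = det D * (det V * det W)" by (simp add: algebra_simps)
  also have "det V * det W = 1" by (metis det_mult[OF V W(1)] W(2) det_one)
  also have "det D * 1 = 1" using prd by (simp add: D_def det_mat_diag)
  finally have "real_of_int (det A) = 1" unfolding AR_def by (simp add: of_int_hom.hom_det)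
  hence "det A = 1" by simp
  thus ?thesis using A sim unfolding AR_def D_def by blast
qed

lemma prod_roots_dvd:
  fixes p :: "real poly"
  assumes "finite I" "inj_on e I" "\<forall>i\<in>I. poly p (e i) = 0"
  shows "(\<Prod>i\<in>I. [:-e i, 1:]) dvd p"
  using assms
proof (induction I rule: finite_induct)
  case empty thus ?case by simp
next
  case (insert x F)
  hence "(\<Prod>i\<in>F. [:-e i, 1:]) dvd p" by (auto simp: inj_on_insert)
  then obtain q where q: "p = (\<Prod>i\<in>F. [:-e i, 1:]) * q" by (elim dvdE)
  have ne: "e x \<noteq> e i" if "i \<in> F" for i using insert.prems(1) insert.hyps(2) that
    by (auto simp: inj_on_def)
  have "poly (\<Prod>i\<in>F. [:-e i, 1:]) (e x) \<noteq> 0"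
    using ne insert.hyps(1) by (simp add: poly_prod prod_zero_iff)
  moreover have "poly p (e x) = 0" using insert.prems by auto
  ultimately have "poly q (e x) = 0" by (simp add: q)
  hence "[:-e x, 1:] dvd q" by (simp add: poly_eq_0_iff_dvd)
  hence "[:-e x, 1:] * (\<Prod>i\<in>F. [:-e i, 1:]) dvd (\<Prod>i\<in>F. [:-e i, 1:]) * q"
    by (metis dvd_refl mult.commute mult_dvd_mono)
  thus ?case using insert.hyps q by simp
qed

lemma last_root:
  fixes p :: "real poly"
  assumes dp: "degree p = n" and lc: "coeff p n = 1" and n: "n \<ge> 1" and I: "finite I" "card I = n - 1"
    and inj: "inj_on e I" and r: "\<forall>i\<in>I. poly p (e i) = 0"
  shows "\<exists>t. poly p t = 0 \<and> coeff p 0 = (-1)^n * (\<Prod>i\<in>I. e i) * t"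
proof -
  define F where "F = (\<Prod>i\<in>I. [:-e i, 1:])"
  have "F dvd p" unfolding F_def by (rule prod_roots_dvd[OF I(1) inj r])
  then obtain Q where Q: "p = F * Q" by (elim dvdE)
  have F0: "F \<noteq> 0" unfolding F_def using I(1) by (simp add: prod_zero_iff)
  have p0: "p \<noteq> 0" using lc by auto
  hence Q0: "Q \<noteq> 0" using Q by auto
  have dF: "degree F = n - 1" unfolding F_def
    by (subst degree_prod_eq_sum_degree) (auto simp: I)
  have lF: "lead_coeff F = 1" unfolding F_def by (simp add: lead_coeff_prod)
  have dQ: "degree Q = 1" using degree_mult_eq[OF F0 Q0] Q dp dF n by simp
  have lQ: "coeff Q 1 = 1" using lead_coeff_mult[of F Q] Q lF dQ dp lc by simp
  have pQ: "poly Q x = coeff Q 0 + x" for x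
    using lQ dQ by (simp add: poly_altdef)
  define t where "t = - coeff Q 0"
  have "poly p t = 0" using pQ Q by (simp add: t_def)
  moreover have "coeff p 0 = (-1)^n * (\<Prod>i\<in>I. e i) * t"
  proof -
    have "coeff p 0 = poly F 0 * poly Q 0" by (simp add: Q poly_0_coeff_0[symmetric])
    also have "poly F 0 = (\<Prod>i\<in>I. (-1) * e i)" unfolding F_def by (simp add: poly_prod)
    also have "\<dots> = (-1)^(n-1) * (\<Prod>i\<in>I. e i)" by (subst prod.distrib) (simp add: I)
    also have "poly Q 0 = (-1) * t" using pQ by (simp add: t_def)
    finally show ?thesis using n by (simp add: power_eq_if algebra_simps)
  qed
  ultimately show ?thesis by blast
qed

lemma int_coeffs_mult:
  fixes p q :: "real poly"
  assumes "\<forall>j. coeff p j \<in> \<int>" "\<forall>j. coeff q j \<in> \<int>"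
  shows "\<forall>j. coeff (p * q) j \<in> \<int>"
  using assms by (auto simp: coeff_mult intro!: Ints_sum Ints_mult)

lemma int_coeffs_prod:
  fixes f :: "nat \<Rightarrow> real poly"
  assumes "\<forall>i\<in>S. \<forall>j. coeff (f i) j \<in> \<int>"
  shows "\<forall>j. coeff (\<Prod>i\<in>S. f i) j \<in> \<int>"
  using assms
proof (induction S rule: infinite_finite_induct)
  case (infinite A) thus ?case by (auto simp: coeff_1)
next
  case empty thus ?case by (auto simp: coeff_1)
next
  case (insert x F) thus ?case by (simp add: int_coeffs_mult)
qed

lemma poly_upto:
  fixes p :: "real poly"
  assumes "degree p \<le> n"
  shows "poly p x = (\<Sum>j\<le>n. coeff p j * x ^ j)"
proof -
  have "poly p x = (\<Sum>j\<le>degree p. coeff p j * x ^ j)" by (rule poly_altdef)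
  also have "\<dots> = (\<Sum>j\<le>n. coeff p j * x ^ j)"
    by (rule sum.mono_neutral_left) (use assms in \<open>auto simp: coeff_eq_0\<close>)
  finally show ?thesis .
qed

lemma poly_structure:
  fixes a :: "nat \<Rightarrow> int" and b :: int and K :: nat and s :: int and n m :: nat and x :: real
  assumes n: "n \<ge> 2" and m: "m = n - 2"
  defines "PR \<equiv> monom 1 n + [:real_of_int s:] - smult (real K) (pCons 0 (\<Prod>i<m. [:-real_of_int (a i), real_of_int b:]))"
  shows "poly PR x = x^n + s - K*(x*(\<Prod>i<m. (b*x - a i)))"
    and "coeff PR n = 1" and "degree PR = n" and "\<forall>j. coeff PR j \<in> \<int>" and "coeff PR 0 = s"
    and "poly PR x = x^n + (\<Sum>j<n. coeff PR j * x^j)"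
proof -
  define G where "G = (\<Prod>i<m. [:-real_of_int (a i), real_of_int b:])"
  have "degree G \<le> sum (degree \<circ> (\<lambda>i. [:-real_of_int (a i), real_of_int b:])) {..<m}"
    unfolding G_def by (rule degree_prod_sum_le) simp
  also have "\<dots> \<le> (\<Sum>i<m. 1)" by (intro sum_mono) auto
  finally have dG: "degree G \<le> m" by simp
  have dG': "degree (pCons 0 G) < n" using degree_pCons_le[of 0 G] dG n m by linarith
  have cS: "coeff (smult (real K) (pCons 0 G)) j = 0" if "j \<ge> n" for j
  proof -
    have "degree (smult (real K) (pCons 0 G)) < n" using dG' degree_smult_le[of "real K" "pCons 0 G"] by linarith
    thus ?thesis using that by (intro coeff_eq_0) linarith
  qed
  have PR': "PR = monom 1 n + [:real_of_int s:] - smult (real K) (pCons 0 G)" by (simp add: PR_def G_def)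
  show "poly PR x = x^n + s - K*(x*(\<Prod>i<m. (b*x - a i)))"
    by (simp add: PR' G_def poly_monom poly_prod algebra_simps)
  show c1: "coeff PR n = 1" using cS[of n] n by (auto simp: PR' coeff_pCons split: nat.splits)
  have cz: "coeff PR j = 0" if "j > n" for j using cS[of j] that n by (auto simp: PR' coeff_pCons coeff_monom split: nat.splits)
  show dP: "degree PR = n"
  proof (rule antisym)
    show "degree PR \<le> n" by (rule degree_le) (use cz in auto)
    show "n \<le> degree PR" using c1 by (intro le_degree) auto
  qed
  have GI: "\<forall>j. coeff G j \<in> \<int>" unfolding G_def
    by (rule int_coeffs_prod) (auto simp: coeff_pCons split: nat.splits)
  show "\<forall>j. coeff PR j \<in> \<int>"
  proof
    fix j
    have "coeff (pCons 0 G) j \<in> \<int>" using GI by (cases j) auto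
    thus "coeff PR j \<in> \<int>" by (auto simp: PR' coeff_monom coeff_pCons split: nat.splits)
  qed
  show "coeff PR 0 = s" using n by (simp add: PR' coeff_monom)
  have "poly PR x = (\<Sum>j\<le>n. coeff PR j * x ^ j)" using dP by (intro poly_upto) simp
  also have "\<dots> = x^n + (\<Sum>j<n. coeff PR j * x^j)" using c1
    by (simp add: lessThan_Suc_atMost[symmetric])
  finally show "poly PR x = x^n + (\<Sum>j<n. coeff PR j * x^j)" .
qed

lemma prod_sign_change:
  fixes R :: "real set"
  assumes R: "finite R" "\<rho> \<in> R" and d: "\<delta> > 0" and sep: "\<forall>\<sigma>\<in>R. \<sigma> \<noteq> \<rho> \<longrightarrow> \<delta> < \<bar>\<rho> - \<sigma>\<bar>"
  shows "(\<Prod>\<sigma>\<in>R. (\<rho>+\<delta>-\<sigma>)) * (\<Prod>\<sigma>\<in>R. (\<rho>-\<delta>-\<sigma>)) < 0"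
proof -
  have "(\<Prod>\<sigma>\<in>R. (\<rho>+\<delta>-\<sigma>)) * (\<Prod>\<sigma>\<in>R. (\<rho>-\<delta>-\<sigma>)) = (\<Prod>\<sigma>\<in>R. (\<rho>+\<delta>-\<sigma>) * (\<rho>-\<delta>-\<sigma>))"
    by (simp add: prod.distrib)
  also have "\<dots> = ((\<rho>+\<delta>-\<rho>) * (\<rho>-\<delta>-\<rho>)) * (\<Prod>\<sigma>\<in>R-{\<rho>}. (\<rho>+\<delta>-\<sigma>) * (\<rho>-\<delta>-\<sigma>))"
    using R by (simp add: prod.remove)
  also have "\<dots> < 0"
  proof (rule mult_neg_pos)
    show "(\<rho>+\<delta>-\<rho>) * (\<rho>-\<delta>-\<rho>) < 0" using d by simp
    show "0 < (\<Prod>\<sigma>\<in>R-{\<rho>}. (\<rho>+\<delta>-\<sigma>) * (\<rho>-\<delta>-\<sigma>))"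
    proof (rule prod_pos)
      fix \<sigma> assume "\<sigma> \<in> R - {\<rho>}"
      hence h: "\<delta> < \<bar>\<rho> - \<sigma>\<bar>" using sep by auto
      have e: "(\<rho>+\<delta>-\<sigma>) * (\<rho>-\<delta>-\<sigma>) = (\<rho>-\<sigma>)^2 - \<delta>^2" by (simp add: algebra_simps power2_eq_square)
      have "\<delta>^2 < \<bar>\<rho>-\<sigma>\<bar>^2" by (rule power_strict_mono) (use h d in auto)
      hence "\<delta>^2 < (\<rho>-\<sigma>)^2" by simp
      thus "0 < (\<rho>+\<delta>-\<sigma>) * (\<rho>-\<delta>-\<sigma>)" using e by simp
    qed
  qed
  finally show ?thesis .
qed

lemma quad_neg:
  fixes \<alpha> \<beta> \<gamma> :: real
  assumes "\<gamma> < 0"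
  shows "\<exists>M. \<forall>y\<ge>M. \<alpha> + \<beta>*y + \<gamma>*y^2 < 0"
proof (intro exI allI impI)
  fix y :: real
  define S where "S = \<bar>\<alpha>\<bar>+\<bar>\<beta>\<bar>"
  assume y: "y \<ge> max 1 ((\<bar>\<alpha>\<bar>+\<bar>\<beta>\<bar>+1)/(-\<gamma>))"
  hence y1: "y \<ge> 1" and "(\<bar>\<alpha>\<bar>+\<bar>\<beta>\<bar>+1)/(-\<gamma>) \<le> y" by auto
  hence y2: "S + 1 \<le> y * (-\<gamma>)" unfolding S_def
    using pos_divide_le_eq[of "-\<gamma>" "\<bar>\<alpha>\<bar>+\<bar>\<beta>\<bar>+1" y] assms by linarith
  have a1: "\<bar>\<alpha>\<bar> \<le> \<bar>\<alpha>\<bar>*y" using mult_left_mono[OF y1, of "\<bar>\<alpha>\<bar>"] by simp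
  have a2: "\<beta>*y \<le> \<bar>\<beta>\<bar>*y" using mult_right_mono[OF abs_ge_self[of \<beta>], of y] y1 by simp
  have e1: "S*y = \<bar>\<alpha>\<bar>*y + \<bar>\<beta>\<bar>*y" by (simp add: S_def distrib_right)
  have b1: "\<alpha> + \<beta>*y \<le> S*y" using a1 a2 abs_ge_self[of \<alpha>] e1 by linarith
  have b2: "(S+1) * y \<le> (y * (-\<gamma>)) * y" using y1 y2 by (intro mult_right_mono) auto
  have e2: "(S+1) * y = S*y + y" by (simp add: distrib_right)
  have e3: "(y * (-\<gamma>)) * y = - (\<gamma>*y^2)" by (simp add: power2_eq_square)
  show "\<alpha> + \<beta>*y + \<gamma>*y^2 < 0" using b1 b2 e2 e3 y1 by linarith
qed

lemma sign_change_large: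
  fixes qu qv hu hv :: real
  assumes "hu * hv < 0"
  shows "\<exists>M. \<forall>y\<ge>M. (qu - y*hu) * (qv - y*hv) < 0"
proof -
  obtain M where M: "\<forall>y\<ge>M. qu*qv + (-(qu*hv + qv*hu))*y + (hu*hv)*y^2 < 0"
    using quad_neg[OF assms] by blast
  show ?thesis
  proof (intro exI allI impI)
    fix y assume "y \<ge> M"
    from M[rule_format, OF this]
    have "qu*qv + (-(qu*hv + qv*hu))*y + (hu*hv)*y^2 < 0" .
    moreover have "(qu - y*hu) * (qv - y*hv) = qu*qv + (-(qu*hv + qv*hu))*y + (hu*hv)*y^2"
      by (simp add: algebra_simps power2_eq_square)
    ultimately show "(qu - y*hu) * (qv - y*hv) < 0" by simp
  qed
qed

lemma int_digit:
  fixes k x y u v :: int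
  assumes "k > 0" "0 \<le> u" "u < k" "0 \<le> v" "v < k" "k*x + u = k*y + v"
  shows "x = y \<and> u = v"
proof -
  have "(k*x + u) mod k = u" using assms(1-3) by simp
  moreover have "(k*y + v) mod k = v" using assms(1,4,5) by simp
  ultimately have "u = v" using assms(6) by simp
  thus ?thesis using assms by simp
qed
lemma rdiff: fixes f :: int and n N :: nat and i :: nat and mu :: real
  assumes "real n * real N > 0"
  shows "real_of_int (int n * f + (int i + 1)) / real_of_int (int n * int N) - mu = (real n * (real_of_int f - mu * real N) + (real i + 1)) / (real n * real N)"
proof -
  have "real_of_int (int n * f + (int i + 1)) / real_of_int (int n * int N) = (real n * f + (real i + 1)) / (real n * real N)" by simp
  also have "\<dots> - mu = (real n * f + (real i + 1) - mu * (real n * real N)) / (real n * real N)"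
    using assms by (simp add: diff_divide_distrib zero_less_mult_iff)
  also have "real n * f + (real i + 1) - mu * (real n * real N) = real n * (real_of_int f - mu * real N) + (real i + 1)"
    by (simp add: algebra_simps)
  finally show ?thesis .
qed

theorem mainTheorem6:
  fixes n :: nat and \<epsilon> :: real and \<mu> :: "nat \<Rightarrow> real"
  assumes "n \<ge> 2" and "\<epsilon> > 0"
  shows "\<exists>A :: int mat. A \<in> carrier_mat n n \<and> det A = 1 \<and>
           (\<exists>ev :: nat \<Rightarrow> real.
              similar_mat (map_mat real_of_int A) (mat_diag n ev) \<and>
              (\<forall>i < n - 2. \<bar>ev i - \<mu> i\<bar> < \<epsilon>) \<and>
              \<bar>ev (n - 2)\<bar> > 1 / \<epsilon> \<and> \<bar>ev (n - 1)\<bar> < \<epsilon>)"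
proof -
  note n2 = assms(1) and ep = assms(2)
  define m where "m = n - 2"
  have nm: "n = m + 2" using n2 m_def by simp
  obtain N :: nat where N: "4/\<epsilon> < real N" using reals_Archimedean2 by blast
  have Npos: "real N > 0" using N ep by (smt (verit) divide_pos_pos)
  define b :: int where "b = int n * int N"
  have bpos: "b \<ge> 1" using Npos nm unfolding b_def
    by (metis Num.of_nat_simps(1) add_gr_0 less_le_not_le mult_pos_pos not_less of_nat_0_less_iff zero_less_numeral int_one_le_iff_zero_less)
  define a :: "nat \<Rightarrow> int" where "a i = int n * \<lfloor>\<mu> i * real N\<rfloor> + (int i + 1)" for i
  define r :: "nat \<Rightarrow> real" where "r i = real_of_int (a i) / real_of_int b" for i
  have rb: "real_of_int b * r i = real_of_int (a i)" for i using bpos by (simp add: r_def)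
  have rmu: "\<bar>r i - \<mu> i\<bar> < \<epsilon>/2" if i: "i < m" for i
  proof -
    define f where "f = \<lfloor>\<mu> i * real N\<rfloor>"
    have f1: "real_of_int f \<le> \<mu> i * real N" and f2: "\<mu> i * real N < real_of_int f + 1"
      unfolding f_def by linarith+
    define X where "X = real n * (real_of_int f - \<mu> i * real N) + (real i + 1)"
    have D: "real n * real N > 0" using Npos nm by simp
    have req: "r i - \<mu> i = X / (real n * real N)"
      unfolding r_def a_def b_def f_def X_def by (rule rdiff) (use Npos nm in simp)
    have Xb: "\<bar>X\<bar> < real n"
    proof -
      have "real n * (real_of_int f - \<mu> i * real N) \<le> 0" using f1 by (intro mult_nonneg_nonpos) auto
      moreover have "real n * (real_of_int f - \<mu> i * real N) > real n * (-1)"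
        by (rule mult_strict_left_mono) (use f2 nm in auto)
      moreover have "real i + 1 < real n" using i nm by simp
      ultimately show ?thesis unfolding X_def by linarith
    qed
    have "\<bar>r i - \<mu> i\<bar> = \<bar>X\<bar> / (real n * real N)" using D by (simp add: req abs_div)
    also have "\<dots> < real n / (real n * real N)" by (rule divide_strict_right_mono[OF Xb D])
    also have "\<dots> = 1 / real N" using nm by simp
    also have "\<dots> < \<epsilon>/2" using N ep Npos by (simp add: field_simps)
    finally show ?thesis .
  qed
  have a_inj: "i = j" if "i < m" "j < m" "a i = a j" for i j
  proof -
    have "int i + 1 = int j + 1"
      using int_digit[where k="int n" and x="\<lfloor>\<mu> i * real N\<rfloor>" and y="\<lfloor>\<mu> j * real N\<rfloor>" and u="int i + 1" and v="int j + 1"] that nm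
      by (auto simp: a_def)
    thus ?thesis by simp
  qed
  have a_nz: "a i \<noteq> 0" if "i < m" for i
  proof
    assume "a i = 0"
    thus False
      using int_digit[where k="int n" and x="\<lfloor>\<mu> i * real N\<rfloor>" and y=0 and u="int i + 1" and v=0] that nm
      by (auto simp: a_def)
  qed
  have r_inj: "inj_on r {..<m}"
  proof (rule inj_onI)
    fix i j assume "i \<in> {..<m}" "j \<in> {..<m}" "r i = r j"
    thus "i = j" using a_inj bpos by (auto simp: r_def)
  qed
  have r_nz: "r i \<noteq> 0" if "i < m" for i using a_nz[OF that] bpos by (simp add: r_def)
  define R where "R = insert 0 (r ` {..<m})"
  have Rfin: "finite R" by (simp add: R_def)
  define B where "B = (\<Prod>i<m. \<bar>r i\<bar> + 1)"
  define C where "C = 1 + (\<Sum>i<m. \<bar>r i\<bar> + 1)"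
  have B1: "B \<ge> 1" unfolding B_def by (rule prod_ge_1) auto
  have C1: "C \<ge> 1" unfolding C_def by (smt (verit) sum_nonneg abs_ge_zero)
  have Cr: "\<bar>r i\<bar> + 1 < C" if "i < m" for i
  proof -
    have "\<bar>r i\<bar> + 1 \<le> (\<Sum>i<m. \<bar>r i\<bar> + 1)"
      using that by (intro member_le_sum) auto
    thus ?thesis by (simp add: C_def)
  qed
  define Ds where "Ds = (\<lambda>(\<rho>,\<sigma>). \<bar>\<rho> - \<sigma>\<bar>) ` {p \<in> R \<times> R. fst p \<noteq> snd p}"
  have Dsfin: "finite Ds" unfolding Ds_def using Rfin by simp
  have Dspos: "\<forall>d\<in>Ds. d > 0" unfolding Ds_def by auto
  define e0 where "e0 = min (\<epsilon>/2) (min 1 (min (\<epsilon>/B) (1/(B*C))))"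
  have e0pos: "e0 > 0" using ep B1 C1 by (simp add: e0_def)
  define \<delta>0 where "\<delta>0 = Min (insert e0 Ds)"
  have d0pos: "\<delta>0 > 0" unfolding \<delta>0_def using Dsfin Dspos e0pos by (simp add: Min_gr_iff)
  have d0e: "\<delta>0 \<le> e0" unfolding \<delta>0_def using Dsfin by simp
  have d0D: "\<delta>0 \<le> \<bar>\<rho> - \<sigma>\<bar>" if "\<rho> \<in> R" "\<sigma> \<in> R" "\<rho> \<noteq> \<sigma>" for \<rho> \<sigma>
  proof -
    have "\<bar>\<rho> - \<sigma>\<bar> \<in> Ds" unfolding Ds_def using that by (auto intro!: image_eqI[of _ _ "(\<rho>,\<sigma>)"])
    thus ?thesis unfolding \<delta>0_def using Dsfin by simp
  qed
  define \<delta> where "\<delta> = \<delta>0 / 3"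
  have dpos: "\<delta> > 0" using d0pos by (simp add: \<delta>_def)
  have d_eps: "\<delta> < \<epsilon>/2" and d1: "\<delta> < 1" and dB: "\<delta> * B < \<epsilon>" and dBC: "\<delta> * B * C < 1"
  proof -
    have "\<delta> < e0" using d0e d0pos by (simp add: \<delta>_def)
    hence "\<delta> < \<epsilon>/2" "\<delta> < 1" "\<delta> < \<epsilon>/B" "\<delta> < 1/(B*C)" unfolding e0_def by auto
    thus "\<delta> < \<epsilon>/2" "\<delta> < 1" "\<delta> * B < \<epsilon>" "\<delta> * B * C < 1" using B1 C1
      by (auto simp: field_simps)
  qed
  have sep: "2 * \<delta> < \<bar>\<rho> - \<sigma>\<bar>" if "\<rho> \<in> R" "\<sigma> \<in> R" "\<rho> \<noteq> \<sigma>" for \<rho> \<sigma>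
    using d0D[OF that] d0pos by (simp add: \<delta>_def)
  define h where "h x = (\<Prod>\<sigma>\<in>R. (x - \<sigma>))" for x
  have h_eq: "x * (\<Prod>i<m. (real_of_int b * x - real_of_int (a i))) = real_of_int b ^ m * h x" for x
  proof -
    have "(\<Prod>i<m. (real_of_int b * x - real_of_int (a i))) = (\<Prod>i<m. real_of_int b * (x - r i))"
      by (intro prod.cong) (auto simp: rb[symmetric] algebra_simps)
    also have "\<dots> = real_of_int b ^ m * (\<Prod>i<m. (x - r i))" by (simp add: prod.distrib)
    finally have 1: "(\<Prod>i<m. (real_of_int b * x - real_of_int (a i))) = real_of_int b ^ m * (\<Prod>i<m. (x - r i))" .
    have "0 \<notin> r ` {..<m}" using r_nz by auto
    hence "h x = (x - 0) * (\<Prod>\<sigma>\<in>r ` {..<m}. (x - \<sigma>))" by (simp add: h_def R_def)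
    also have "(\<Prod>\<sigma>\<in>r ` {..<m}. (x - \<sigma>)) = (\<Prod>i<m. (x - r i))"
      by (simp add: prod.reindex[OF r_inj])
    finally show ?thesis using 1 by simp
  qed
  define s :: int where "s = (-1)^n"
  define q where "q x = x^n + real_of_int s" for x
  have hsign: "h (\<rho>+\<delta>) * h (\<rho>-\<delta>) < 0" if "\<rho> \<in> R" for \<rho>
    unfolding h_def
    by (rule prod_sign_change[OF Rfin that dpos]) (use sep[OF that] dpos in force)
  have "\<forall>\<rho>\<in>R. \<exists>M. \<forall>y\<ge>M. (q (\<rho>+\<delta>) - y * h (\<rho>+\<delta>)) * (q (\<rho>-\<delta>) - y * h (\<rho>-\<delta>)) < 0"
    using hsign sign_change_large by blast
  then obtain Mf where Mf: "\<forall>\<rho>\<in>R. \<forall>y\<ge>Mf \<rho>. (q (\<rho>+\<delta>) - y * h (\<rho>+\<delta>)) * (q (\<rho>-\<delta>) - y * h (\<rho>-\<delta>)) < 0"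
    by metis
  define Mx where "Mx = Max (Mf ` R)"
  define K :: nat where "K = nat \<lceil>max Mx 0\<rceil>"
  define y where "y = real K * real_of_int b ^ m"
  have yM: "y \<ge> Mf \<rho>" if "\<rho> \<in> R" for \<rho>
  proof -
    have "Mf \<rho> \<le> Mx" unfolding Mx_def using Rfin that by simp
    also have "Mx \<le> real K" unfolding K_def by linarith
    also have "real K \<le> y" unfolding y_def
      using bpos by (simp add: mult_le_cancel_left1 one_le_power)
    finally show ?thesis .
  qed
  define PR where "PR = monom 1 n + [:real_of_int s:] - smult (real K) (pCons 0 (\<Prod>i<m. [:-real_of_int (a i), real_of_int b:]))"
  have PRev: "poly PR x = q x - y * h x" for x
  proof -
    have "poly PR x = x^n + s - K*(x*(\<Prod>i<m. (b*x - a i)))"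
      unfolding PR_def by (rule poly_structure(1)[OF n2 m_def])
    also have "\<dots> = q x - y * h x" by (simp add: h_eq q_def y_def)
    finally show ?thesis .
  qed
  have PRc1: "coeff PR n = 1" unfolding PR_def by (rule poly_structure(2)[OF n2 m_def])
  have PRd: "degree PR = n" unfolding PR_def by (rule poly_structure(3)[OF n2 m_def])
  have PRint: "\<forall>j. coeff PR j \<in> \<int>" unfolding PR_def by (rule poly_structure(4)[OF n2 m_def])
  have PR0: "coeff PR 0 = s" unfolding PR_def by (rule poly_structure(5)[OF n2 m_def])
  have PRsum: "poly PR x = x^n + (\<Sum>j<n. coeff PR j * x^j)" for x
    unfolding PR_def by (rule poly_structure(6)[OF n2 m_def])
  have near: "\<exists>x. \<bar>x - \<rho>\<bar> < \<delta> \<and> poly PR x = 0" if "\<rho> \<in> R" for \<rho>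
  proof -
    have "poly PR (\<rho>-\<delta>) * poly PR (\<rho>+\<delta>) < 0"
      using Mf[rule_format, OF that yM[OF that]] by (simp add: PRev mult.commute)
    from poly_IVT[OF _ this] dpos obtain x where "\<rho>-\<delta> < x" "x < \<rho>+\<delta>" "poly PR x = 0" by auto
    thus ?thesis by (intro exI[of _ x]) auto
  qed
  have "\<forall>i<m. \<exists>x. \<bar>x - r i\<bar> < \<delta> \<and> poly PR x = 0" using near by (auto simp: R_def)
  then obtain lam where lam: "\<And>i. i < m \<Longrightarrow> \<bar>lam i - r i\<bar> < \<delta> \<and> poly PR (lam i) = 0" by metis
  obtain ls where ls: "\<bar>ls\<bar> < \<delta>" "poly PR ls = 0" using near[of 0] by (auto simp: R_def)
  have lam_inj: "i = j" if "i < m" "j < m" "lam i = lam j" for i j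
  proof (rule ccontr)
    assume "i \<noteq> j"
    hence "r i \<noteq> r j" using r_inj that by (auto simp: inj_on_def)
    hence "2 * \<delta> < \<bar>r i - r j\<bar>" using that by (intro sep) (auto simp: R_def)
    thus False using lam[of i] lam[of j] that by linarith
  qed
  have lam_ls: "lam i \<noteq> ls" if "i < m" for i
  proof
    assume "lam i = ls"
    have "2 * \<delta> < \<bar>r i - 0\<bar>" using that r_nz[OF that] by (intro sep) (auto simp: R_def)
    thus False using lam[OF that] ls \<open>lam i = ls\<close> by linarith
  qed
  define I where "I = insert (m+1) {..<m}"
  define e where "e i = (if i = m+1 then ls else lam i)" for i
  have Ifin: "finite I" and Icard: "card I = n - 1" using nm by (auto simp: I_def)
  have e_inj: "inj_on e I"
    unfolding inj_on_def I_def e_def using lam_inj lam_ls by (metis insert_iff lessThan_iff less_irrefl_nat less_add_one)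
  have e_root: "\<forall>i\<in>I. poly PR (e i) = 0" using lam ls by (auto simp: I_def e_def)
  obtain t where t: "poly PR t = 0" "coeff PR 0 = (-1)^n * (\<Prod>i\<in>I. e i) * t"
    using last_root[OF PRd PRc1 _ Ifin Icard e_inj e_root] nm by auto
  have prodI: "(\<Prod>i\<in>I. e i) = ls * (\<Prod>i<m. lam i)"
    by (simp add: I_def e_def)
  have tprod: "ls * (\<Prod>i<m. lam i) * t = 1"
    using t(2) PR0 prodI by (simp add: s_def)
  have lamb: "\<bar>lam i\<bar> \<le> \<bar>r i\<bar> + 1" if "i < m" for i using lam[OF that] d1 by linarith
  have Pb: "\<bar>\<Prod>i<m. lam i\<bar> \<le> B"
    unfolding B_def abs_prod by (intro prod_mono) (use lamb in auto)
  have Pb2: "\<bar>ls * (\<Prod>i<m. lam i)\<bar> \<le> \<delta> * B"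
    unfolding abs_mult by (intro mult_mono) (use ls Pb dpos in auto)
  have Pnz: "ls * (\<Prod>i<m. lam i) \<noteq> 0" using tprod by (metis mult_zero_left zero_neq_one)
  have tabs: "\<bar>t\<bar> = 1 / \<bar>ls * (\<Prod>i<m. lam i)\<bar>"
    using tprod Pnz by (simp add: field_simps abs_mult[symmetric])
  have tge: "\<bar>t\<bar> \<ge> 1 / (\<delta> * B)"
  proof -
    have p1: "0 < \<bar>ls * (\<Prod>i<m. lam i)\<bar>" using Pnz by simp
    have p2: "0 < \<delta> * B" using dpos B1 by simp
    show ?thesis unfolding tabs using Pb2 mult_pos_pos[OF p2 p1] by (intro divide_left_mono) auto
  qed
  have t_eps: "\<bar>t\<bar> > 1 / \<epsilon>"
  proof -
    have p2: "0 < \<delta> * B" using dpos B1 by simp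
    have "1/\<epsilon> < 1/(\<delta>*B)" using dB mult_pos_pos[OF ep p2] by (intro divide_strict_left_mono) auto
    thus ?thesis using tge by linarith
  qed
  have t_C: "\<bar>t\<bar> > C"
  proof -
    have "C < 1/(\<delta>*B)" using dBC dpos B1 by (simp add: field_simps)
    thus ?thesis using tge by linarith
  qed
  define ev where "ev k = (if k < m then lam k else if k = m then t else ls)" for k
  have ev_roots: "poly PR (ev k) = 0" for k using lam ls t by (simp add: ev_def)
  have ev_inj: "inj_on ev {..<n}"
  proof (rule inj_onI)
    fix i j assume i: "i \<in> {..<n}" and j: "j \<in> {..<n}" and eq: "ev i = ev j"
    have tl: "t \<noteq> lam k" if "k < m" for k using t_C Cr[OF that] lamb[OF that] by auto
    have tls: "t \<noteq> ls" using t_C C1 ls d1 by auto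
    show "i = j" using i j eq nm tl tls lam_inj lam_ls
      by (auto simp: ev_def split: if_splits)
  qed
  have ev_prod: "(\<Prod>k<n. ev k) = 1"
  proof -
    have "(\<Prod>k<n. ev k) = (\<Prod>k<m. ev k) * ev m * ev (m+1)" using nm by simp
    also have "(\<Prod>k<m. ev k) = (\<Prod>k<m. lam k)" by (intro prod.cong) (auto simp: ev_def)
    finally show ?thesis using tprod by (simp add: ev_def algebra_simps)
  qed
  define c where "c j = \<lfloor>coeff PR j\<rfloor>" for j
  have cR: "real_of_int (c j) = coeff PR j" for j
    using PRint by (metis Ints_cases c_def floor_of_int)
  have roots: "ev k ^ n + (\<Sum>j<n. real_of_int (c j) * ev k ^ j) = 0" if "k < n" for k
    using ev_roots[of k] PRsum[of "ev k"] by (simp add: cR)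
  obtain A :: "int mat" where A: "A \<in> carrier_mat n n" "det A = 1" "similar_mat (map_mat real_of_int A) (mat_diag n ev)"
    using companion_diag[OF ev_inj roots ev_prod] by blast
  have b1: "\<forall>i < n - 2. \<bar>ev i - \<mu> i\<bar> < \<epsilon>"
  proof (intro allI impI)
    fix i assume "i < n - 2"
    hence i: "i < m" using m_def by simp
    have "\<bar>ev i - \<mu> i\<bar> \<le> \<bar>lam i - r i\<bar> + \<bar>r i - \<mu> i\<bar>" using i by (simp add: ev_def)
    thus "\<bar>ev i - \<mu> i\<bar> < \<epsilon>" using lam[OF i] rmu[OF i] d_eps by linarith
  qed
  have b2: "\<bar>ev (n - 2)\<bar> > 1 / \<epsilon>" using t_eps by (simp add: ev_def m_def)
  have b3: "\<bar>ev (n - 1)\<bar> < \<epsilon>" using ls d_eps ep nm by (simp add: ev_def)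
  show ?thesis using A b1 b2 b3 by blast
qed
end
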